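(* Let $K\subseteq\mathbb{R}^d$ be a convex set, $x\in\mathbb{B}$ a direction, and $h$ a hyperplane orthogonal to $x$. Let $H$ be one of the two closed half-spaces induced by $h$, such that $\mathrm{proj}(H,x)$ contains an $\alpha$ fraction of $\mathrm{proj}(K,x)$, for some $\alpha\in[0,1]$. Then for any $z\le \alpha\,\mathrm{width}(K,x)$, \[\mathrm{vol}((K\setminus H)+z\mathbb{B})\le\Big(1-\Big(\frac{\alpha}{1+2\alpha}\Big)^d\Big)\,\mathrm{vol}(K+z\mathbb{B}).\]
   Context: $\mathbb{B}=\{w\in\mathbb{R}^d:\|w\|_2\le1\}$ is the Euclidean unit ball; $A+z\mathbb{B}=\{y+zw: y\in A, w\in\mathbb{B}\}$ is the Minkowski sum; $\mathrm{vol}$ is $d$-dimensional Lebesgue volume. For a set $A$, $\mathrm{proj}(A,x)=\{\langle v,x\rangle: v\in A\}$, and $\mathrm{width}(K,x)=\max_{v\in K}\langle v,x\rangle-\min_{v\in K}\langle v,x\rangle$ is the length of the interval $\mathrm{proj}(K,x)$. "$\mathrm{proj}(H,x)$ contains an $\alpha$ fraction of $\mathrm{proj}(K,x)$" means the intersection $\mathrm{proj}(H,x)\cap\mathrm{proj}(K,x)$ has length $\alpha\,\mathrm{width}(K,x)$. *)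

theory Defs
  imports "HOL-Analysis.Analysis"
begin

definition mink_ball :: "'a::euclidean_space set \<Rightarrow> real \<Rightarrow> 'a set" where
  "mink_ball A z = {y + z *\<^sub>R w | y w. y \<in> A \<and> w \<in> cball 0 1}"

definition proj :: "'a::euclidean_space set \<Rightarrow> 'a \<Rightarrow> real set" where
  "proj A x = (\<lambda>v. inner v x) ` A"

text \<open>width(K,x) = max_{v in K} <v,x> - min_{v in K} <v,x> (K compact nonempty).\<close>
definition width :: "'a::euclidean_space set \<Rightarrow> 'a \<Rightarrow> real" where
  "width K x = Sup (proj K x) - Inf (proj K x)"

end

theory Submission
  imports Defs
begin

lemma mink_ball_convex:
  fixes A :: "'a::euclidean_space set"
  assumes "convex A"
  shows "convex (mink_ball A z)"
  unfolding convex_def mink_ball_def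
proof (safe)
  fix y1 w1 y2 w2 :: 'a and u v :: real
  assume h: "y1 \<in> A" "w1 \<in> cball 0 1" "y2 \<in> A" "w2 \<in> cball 0 1" "0 \<le> u" "0 \<le> v" "u + v = 1"
  have "u *\<^sub>R y1 + v *\<^sub>R y2 \<in> A" using assms h unfolding convex_def by blast
  moreover have "u *\<^sub>R w1 + v *\<^sub>R w2 \<in> cball 0 1"
    using convex_cball[of "0::'a" 1] h unfolding convex_def by blast
  moreover have "u *\<^sub>R (y1 + z *\<^sub>R w1) + v *\<^sub>R (y2 + z *\<^sub>R w2)
     = (u *\<^sub>R y1 + v *\<^sub>R y2) + z *\<^sub>R (u *\<^sub>R w1 + v *\<^sub>R w2)"
    by (simp add: algebra_simps)
  ultimately show "\<exists>y w. u *\<^sub>R (y1 + z *\<^sub>R w1) + v *\<^sub>R (y2 + z *\<^sub>R w2) = y + z *\<^sub>R w \<and> y \<in> A \<and> w \<in> cball 0 1"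
    by blast
qed

lemma mink_ball_mono: "A \<subseteq> B \<Longrightarrow> mink_ball A z \<subseteq> mink_ball B z"
  unfolding mink_ball_def by blast

lemma mink_ball_bounded:
  fixes A :: "'a::euclidean_space set"
  assumes "bounded A"
  shows "bounded (mink_ball A z)"
proof -
  obtain r where r: "\<forall>x\<in>A. norm x \<le> r" using assms bounded_iff by blast
  have "norm v \<le> r + \<bar>z\<bar>" if vin: "v \<in> mink_ball A z" for v
  proof -
    obtain y w where v: "v = y + z *\<^sub>R w" "y \<in> A" "w \<in> cball 0 1"
      using vin unfolding mink_ball_def by blast
    then have v3: "norm w \<le> 1" by (simp add: mem_cball_0)
    have "norm v \<le> norm y + \<bar>z\<bar> * norm w" using v(1) norm_triangle_ineq[of y "z *\<^sub>R w"] by simp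
    also have "\<dots> \<le> r + \<bar>z\<bar> * 1" using v v3 r by (intro add_mono mult_left_mono) auto
    finally show ?thesis by simp
  qed
  then show ?thesis unfolding bounded_iff by blast
qed

lemma core:
  fixes K A :: "'a::euclidean_space set" and u p :: 'a
  assumes K: "convex K" "bounded K" and A: "convex A" "A \<subseteq> K"
    and u: "u \<noteq> 0" "norm u \<le> 1"
    and p: "p \<in> K" "inner p u = m"
    and Kb: "\<forall>v\<in>K. inner v u \<le> m + w"
    and z: "0 \<le> z" "z \<le> \<alpha> * w" and al: "0 \<le> \<alpha>"
    and Ab: "\<forall>v\<in>A. inner v u > m + \<alpha> * w"
  shows "measure lebesgue (mink_ball A z)
           \<le> (1 - (\<alpha> / (1 + 2 * \<alpha>)) ^ DIM('a)) * measure lebesgue (mink_ball K z)"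
proof -
  define n where "n = norm u"
  have n: "0 < n" "n \<le> 1" using u n_def by auto
  define \<beta> where "\<beta> = \<alpha> / (1 + 2 * \<alpha>)"
  have b0: "0 \<le> \<beta>" and b1: "\<beta> \<le> 1" using al by (auto simp: \<beta>_def field_simps)
  have bw: "\<beta> * (1 + 2 * \<alpha>) = \<alpha>" using al by (simp add: \<beta>_def field_simps)
  define S where "S = mink_ball K z"
  define T where "T = mink_ball A z"
  define q where "q = p + z *\<^sub>R (- (1/n) *\<^sub>R u)"
  have qS: "q \<in> S" unfolding S_def mink_ball_def q_def using p n n_def
    by (intro CollectI exI[of _ p] exI[of _ "- (1/n) *\<^sub>R u"]) auto
  have uu: "inner u u = n * n" unfolding n_def by (simp add: power2_norm_eq_inner[symmetric] power2_eq_square)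
  have "inner q u = m - (z / n) * inner u u"
    using p unfolding q_def by (simp add: inner_add_left inner_diff_left)
  also have "\<dots> = m - z * n" using uu n by simp
  finally have qu: "inner q u = m - z * n" .
  define C where "C = (\<lambda>y. \<beta> *\<^sub>R y + (1 - \<beta>) *\<^sub>R q) ` S"
  have Sc: "convex S" using mink_ball_convex[OF K(1)] S_def by simp
  have Sb: "bounded S" using mink_ball_bounded[OF K(2)] S_def by simp
  have Sm: "S \<in> lmeasurable" using measurable_convex[OF Sc Sb] .
  have CS: "C \<subseteq> S"
  proof
    fix c assume "c \<in> C"
    then obtain y where y: "y \<in> S" "c = \<beta> *\<^sub>R y + (1 - \<beta>) *\<^sub>R q" unfolding C_def by auto
    show "c \<in> S" using Sc y qS b0 b1 unfolding convex_def by auto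
  qed
  have Cc: "convex C"
  proof -
    have "C = (\<lambda>y. (1 - \<beta>) *\<^sub>R q + \<beta> *\<^sub>R y) ` S" unfolding C_def by (simp add: add.commute)
    then show ?thesis using convex_affinity[OF Sc] by simp
  qed
  have Cm: "C \<in> lmeasurable" using measurable_convex[OF Cc bounded_subset[OF Sb CS]] .
  have Tc: "convex T" using mink_ball_convex[OF A(1)] T_def by simp
  have TS: "T \<subseteq> S" using mink_ball_mono[OF A(2)] S_def T_def by simp
  have Tm: "T \<in> lmeasurable" using measurable_convex[OF Tc bounded_subset[OF Sb TS]] .
  have key: "\<beta> * (w + 2 * z * n) \<le> \<alpha> * w"
  proof -
    have "z * n \<le> z" using n z by (simp add: mult_left_le)
    then have "w + 2 * z * n \<le> w * (1 + 2 * \<alpha>)" using z by (simp add: algebra_simps)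
    then have "\<beta> * (w + 2 * z * n) \<le> \<beta> * (w * (1 + 2 * \<alpha>))" using b0 by (rule mult_left_mono)
    also have "\<dots> = w * (\<beta> * (1 + 2 * \<alpha>))" by (simp only: ac_simps)
    also have "\<dots> = \<alpha> * w" using bw by simp
    finally show ?thesis .
  qed
  have Cup: "inner c u \<le> m + \<alpha> * w - z * n" if cin: "c \<in> C" for c
  proof -
    obtain y where y: "y \<in> S" "c = \<beta> *\<^sub>R y + (1 - \<beta>) *\<^sub>R q" using cin unfolding C_def by auto
    obtain k v where kv: "y = k + z *\<^sub>R v" "k \<in> K" "norm v \<le> 1" using y unfolding S_def mink_ball_def by auto
    have "inner v u \<le> norm v * norm u" by (rule norm_cauchy_schwarz)
    also have "\<dots> \<le> 1 * n" using kv(3) n_def mult_right_mono norm_ge_zero by metis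
    finally have vu: "inner v u \<le> n" by simp
    have "inner y u = inner k u + z * inner v u" using kv by (simp add: inner_add_left)
    also have "\<dots> \<le> m + w + z * n" using Kb kv vu z by (intro add_mono mult_left_mono) auto
    finally have yu: "inner y u \<le> m + w + z * n" .
    have "inner c u = \<beta> * inner y u + (1 - \<beta>) * (m - z * n)" using y qu by (simp add: inner_add_left)
    also have "\<dots> \<le> \<beta> * (m + w + z * n) + (1 - \<beta>) * (m - z * n)" using yu b0 by (simp add: mult_left_mono)
    also have "\<dots> = m - z * n + \<beta> * (w + 2 * z * n)" by (simp add: algebra_simps)
    also have "\<dots> \<le> m + \<alpha> * w - z * n" using key by simp
    finally show ?thesis .
  qed
  have Tlow: "inner t u > m + \<alpha> * w - z * n" if tin: "t \<in> T" for t
  proof -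
    obtain k v where kv: "t = k + z *\<^sub>R v" "k \<in> A" "norm v \<le> 1" using tin unfolding T_def mink_ball_def by auto
    have "- inner v u \<le> norm v * norm u" using norm_cauchy_schwarz[of "-v" u] by simp
    also have "\<dots> \<le> 1 * n" using kv(3) n_def mult_right_mono norm_ge_zero by metis
    finally have vu: "- inner v u \<le> n" by simp
    have "inner t u = inner k u + z * inner v u" using kv by (simp add: inner_add_left)
    moreover have "z * (- inner v u) \<le> z * n" using vu z by (intro mult_left_mono) auto
    ultimately show ?thesis using Ab kv by auto
  qed
  have TSC: "T \<subseteq> S - C" using TS Cup Tlow by fastforce
  have "measure lebesgue T \<le> measure lebesgue (S - C)"
    by (rule measure_mono_fmeasurable[OF TSC]) (use Tm Sm Cm in auto)
  also have "\<dots> = measure lebesgue S - measure lebesgue C"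
    by (rule measure_Diff) (use Sm Cm CS in \<open>auto simp: fmeasurable_def\<close>)
  also have "measure lebesgue C = \<beta> ^ DIM('a) * measure lebesgue S"
    unfolding C_def using measure_lebesgue_affine[of \<beta> "(1 - \<beta>) *\<^sub>R q" S] b0 by simp
  finally show ?thesis unfolding T_def S_def \<beta>_def by (simp add: algebra_simps)
qed


theorem lemma4p5:
  fixes K :: "'a::euclidean_space set" and x :: 'a
    and c \<alpha> z :: real and H :: "'a set"
  assumes "convex K" and "compact K" and "K \<noteq> {}"
    and "x \<noteq> 0" and "norm x \<le> 1"
    and "H = {v. inner v x \<le> c} \<or> H = {v. inner v x \<ge> c}"
    and "0 \<le> \<alpha>" and "\<alpha> \<le> 1"
    and "measure lborel (proj H x \<inter> proj K x) = \<alpha> * width K x"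
    and "0 \<le> z" and "z \<le> \<alpha> * width K x"
  shows "measure lebesgue (mink_ball (K - H) z)
           \<le> (1 - (\<alpha> / (1 + 2 * \<alpha>)) ^ DIM('a)) * measure lebesgue (mink_ball K z)"
proof -
  note Kc = assms(1) and Kk = assms(2) and Kne = assms(3) and x0 = assms(4) and x1 = assms(5)
    and Hd = assms(6) and a0 = assms(7) and a1 = assms(8) and meas = assms(9) and z0 = assms(10) and z1 = assms(11)
  have Kb: "bounded K" using Kk compact_imp_bounded by blast
  have cont: "continuous_on K (\<lambda>v. inner v x)" by (intro continuous_intros)
  obtain pa where pa: "pa \<in> K" "\<forall>v\<in>K. inner pa x \<le> inner v x"
    using continuous_attains_inf[OF Kk Kne cont] by blast
  obtain pb where pb: "pb \<in> K" "\<forall>v\<in>K. inner v x \<le> inner pb x"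
    using continuous_attains_sup[OF Kk Kne cont] by blast
  define a where "a = inner pa x"
  define b where "b = inner pb x"
  have ab: "a \<le> b" using pa pb a_def b_def by auto
  have Kab: "\<forall>v\<in>K. a \<le> inner v x \<and> inner v x \<le> b" using pa pb a_def b_def by auto
  have Inf: "Inf (proj K x) = a" unfolding proj_def a_def
    by (rule cInf_eq_minimum) (use pa in auto)
  have Sup: "Sup (proj K x) = b" unfolding proj_def b_def
    by (rule cSup_eq_maximum) (use pb in auto)
  define w where "w = b - a"
  have wd: "width K x = w" unfolding width_def Inf Sup w_def ..
  have w0: "0 \<le> w" using ab w_def by simp
  have projK: "proj K x = {a..b}"
  proof
    show "proj K x \<subseteq> {a..b}" unfolding proj_def using Kab by auto
    have "connected (proj K x)" unfolding proj_def
      using connected_continuous_image[OF cont convex_connected[OF Kc]] .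
    moreover have "a \<in> proj K x" "b \<in> proj K x" unfolding proj_def a_def b_def using pa pb by auto
    ultimately show "{a..b} \<subseteq> proj K x" using connected_contains_Icc by blast
  qed
  have xx: "inner x x > 0" using x0 by simp
  have surj: "\<exists>v. inner v x = t" for t
    by (rule exI[of _ "(t / inner x x) *\<^sub>R x"]) (use xx in simp)
  have DH: "convex (K - H)"
  proof -
    have "K - H = K \<inter> {v. inner x v > c} \<or> K - H = K \<inter> {v. inner x v < c}"
      using Hd by (auto simp: inner_commute)
    then show ?thesis using convex_Int[OF Kc convex_halfspace_gt] convex_Int[OF Kc convex_halfspace_lt] by metis
  qed
  have DHK: "K - H \<subseteq> K" by blast
  have mb0: "mink_ball S 0 = S" for S :: "'a set"
    unfolding mink_ball_def by (auto intro!: exI[of _ "0::'a"])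
  have RHS0: "0 \<le> (1 - (\<alpha> / (1 + 2 * \<alpha>)) ^ DIM('a)) * measure lebesgue (mink_ball K z)"
  proof -
    have "(\<alpha> / (1 + 2 * \<alpha>)) ^ DIM('a) \<le> 1" using a0 by (intro power_le_one) (auto simp: field_simps)
    then show ?thesis by simp
  qed
  show ?thesis
  proof (cases "\<alpha> * w = 0")
    case True
    then have zz: "z = 0" using z0 z1 wd by (metis antisym)
    show ?thesis
    proof (cases "\<alpha> = 0")
      case True
      have "measure lebesgue (K - H) \<le> measure lebesgue K"
        by (rule measure_mono_fmeasurable[OF DHK])
           (use measurable_convex[OF DH bounded_subset[OF Kb DHK]] measurable_convex[OF Kc Kb] in auto)
      then show ?thesis using True zz mb0 DIM_positive[where 'a='a] by (simp add: power_0_left)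
    next
      case False
      then have "w = 0" using \<open>\<alpha> * w = 0\<close> by simp
      then have "K \<subseteq> {v. x \<bullet> v = a}" using Kab w_def by (force simp: inner_commute)
      then have ng: "negligible (K - H)" using negligible_hyperplane[of x a] x0
        by (meson DHK negligible_subset order_trans)
      then show ?thesis using negligible_imp_measure0[OF ng] RHS0 zz mb0 by simp
    qed
  next
    case False
    then have aw: "0 < \<alpha> * w" using a0 w0 by simp
    from Hd show ?thesis
    proof
      assume H: "H = {v. inner v x \<le> c}"
      have "proj H x = {..c}"
      proof
        show "proj H x \<subseteq> {..c}" unfolding H proj_def by auto
        show "{..c} \<subseteq> proj H x"
        proof
          fix t assume "t \<in> {..c}"
          moreover obtain v where "inner v x = t" using surj by blast
          ultimately show "t \<in> proj H x" unfolding H proj_def by force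
        qed
      qed
      then have "measure lborel ({..c} \<inter> {a..b}) = \<alpha> * w" using meas projK wd by simp
      then have cge: "c \<ge> a + \<alpha> * w"
      proof (cases "c < a")
        case True
        then have "{..c} \<inter> {a..b} = {}" by auto
        then have "\<alpha> * w = 0" using \<open>measure lborel ({..c} \<inter> {a..b}) = \<alpha> * w\<close> by (metis measure_empty)
        then show ?thesis using aw by linarith
      next
        case False
        then have "{..c} \<inter> {a..b} = {a..min b c}" by auto
        then have "min b c - a = \<alpha> * w" using \<open>measure lborel ({..c} \<inter> {a..b}) = \<alpha> * w\<close> False ab by simp
        moreover have "\<alpha> * w \<le> w" using a1 w0 mult_right_mono[of \<alpha> 1 w] by simp
        ultimately show ?thesis using w_def by (cases "b \<le> c") auto
      qed
      show ?thesis
      proof (rule core[OF Kc Kb DH DHK x0 x1 pa(1) refl])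
        show "\<forall>v\<in>K. inner v x \<le> inner pa x + w" using Kab a_def w_def by auto
        show "\<forall>v\<in>K - H. inner pa x + \<alpha> * w < inner v x" using H cge a_def by auto
      qed (use z0 z1 wd a0 in auto)
    next
      assume H: "H = {v. inner v x \<ge> c}"
      have "proj H x = {c..}"
      proof
        show "proj H x \<subseteq> {c..}" unfolding H proj_def by auto
        show "{c..} \<subseteq> proj H x"
        proof
          fix t assume "t \<in> {c..}"
          moreover obtain v where "inner v x = t" using surj by blast
          ultimately show "t \<in> proj H x" unfolding H proj_def by force
        qed
      qed
      then have "measure lborel ({c..} \<inter> {a..b}) = \<alpha> * w" using meas projK wd by simp
      then have cle: "c \<le> b - \<alpha> * w"
      proof (cases "b < c")
        case True
        then have "{c..} \<inter> {a..b} = {}" by auto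
        then have "\<alpha> * w = 0" using \<open>measure lborel ({c..} \<inter> {a..b}) = \<alpha> * w\<close> by (metis measure_empty)
        then show ?thesis using aw by linarith
      next
        case False
        then have "{c..} \<inter> {a..b} = {max a c..b}" by auto
        then have "b - max a c = \<alpha> * w" using \<open>measure lborel ({c..} \<inter> {a..b}) = \<alpha> * w\<close> False ab by simp
        moreover have "\<alpha> * w \<le> w" using a1 w0 mult_right_mono[of \<alpha> 1 w] by simp
        ultimately show ?thesis using w_def by (cases "c \<le> a") auto
      qed
      have x0': "- x \<noteq> 0" using x0 by simp
      have x1': "norm (- x) \<le> 1" using x1 by simp
      show ?thesis
      proof (rule core[OF Kc Kb DH DHK x0' x1' pb(1) refl])
        show "\<forall>v\<in>K. inner v (- x) \<le> inner pb (- x) + w" using Kab b_def w_def by auto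
        show "\<forall>v\<in>K - H. inner pb (- x) + \<alpha> * w < inner v (- x)" using H cle b_def by auto
      qed (use z0 z1 wd a0 in auto)
    qed
  qed
qed

end
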